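(* Let $\mathbb{K}\in\{\mathbb{R},\mathbb{C}\}$, $\mathbf{R}_U\in\mathbb{K}^{n\times n}$ self-adjoint positive definite, $U:=\mathbb{K}^n$ with $\langle\mathbf{x},\mathbf{y}\rangle_U:=\langle\mathbf{R}_U\mathbf{x},\mathbf{y}\rangle$, norm $\|\cdot\|_U$, dual norm $\|\mathbf{y}\|_{U'}:=\langle\mathbf{y},\mathbf{R}_U^{-1}\mathbf{y}\rangle^{1/2}$. Fix $\mu$, an invertible $\mathbf{A}(\mu)\in\mathbb{K}^{n\times n}$, $\mathbf{b}(\mu),\mathbf{l}(\mu)\in\mathbb{K}^n$, $\mathbf{u}(\mu):=\mathbf{A}(\mu)^{-1}\mathbf{b}(\mu)$, $s(\mu):=\langle\mathbf{l}(\mu),\mathbf{u}(\mu)\rangle$, and arbitrary vectors $\mathbf{u}_r(\mu),\mathbf{u}_r^{\mathrm{du}}(\mu)\in U$. Let $\mathbf{r}(\mathbf{x};\mu):=\mathbf{b}(\mu)-\mathbf{A}(\mu)\mathbf{x}$, $\mathbf{r}^{\mathrm{du}}(\mathbf{x};\mu):=-\mathbf{l}(\mu)-\mathbf{A}(\mu)^{\mathrm{H}}\mathbf{x}$, $s_r(\mu):=\langle\mathbf{l}(\mu),\mathbf{u}_r(\mu)\rangle$, let $\mathbf{\Theta}\in\mathbb{K}^{k\times n}$ and $$s_r^{\mathrm{spd}}(\mu):=s_r(\mu)-\langle\mathbf{\Theta}\mathbf{u}_r^{\mathrm{du}}(\mu),\mathbf{\Theta}\mathbf{R}_U^{-1}\mathbf{r}(\mathbf{u}_r(\mu);\mu)\rangle.$$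 Let $\eta(\mu)>0$ satisfy $\eta(\mu)\le\min_{\mathbf{x}\in U\setminus\{\mathbf{0}\}}\|\mathbf{A}(\mu)\mathbf{x}\|_{U'}/\|\mathbf{x}\|_U$. If for some $\varepsilon\in[0,1)$, $|\langle\mathbf{x},\mathbf{y}\rangle_U-\langle\mathbf{\Theta}\mathbf{x},\mathbf{\Theta}\mathbf{y}\rangle|\le\varepsilon\|\mathbf{x}\|_U\|\mathbf{y}\|_U$ for all $\mathbf{x},\mathbf{y}\in\mathrm{span}\{\mathbf{u}_r^{\mathrm{du}}(\mu),\mathbf{R}_U^{-1}\mathbf{r}(\mathbf{u}_r(\mu);\mu)\}$, then $$|s(\mu)-s_r^{\mathrm{spd}}(\mu)|\le\frac{\|\mathbf{r}(\mathbf{u}_r(\mu);\mu)\|_{U'}}{\eta(\mu)}\Big((1+\varepsilon)\|\mathbf{r}^{\mathrm{du}}(\mathbf{u}_r^{\mathrm{du}}(\mu);\mu)\|_{U'}+\varepsilon\|\mathbf{l}(\mu)\|_{U'}\Big).$$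
   Context: $\langle\mathbf{x},\mathbf{y}\rangle=\mathbf{x}^{\mathrm{H}}\mathbf{y}$ is the canonical inner product; $\mathbf{M}^{\mathrm{H}}$ is the (conjugate) transpose. *)

theory Defs
  imports "HOL-Analysis.Analysis"
begin

definition cip :: "complex^'n \<Rightarrow> complex^'n \<Rightarrow> complex" where
  "cip x y = (\<Sum>i\<in>UNIV. cnj (x$i) * y$i)"

definition cadj :: "complex^'n^'m \<Rightarrow> complex^'m^'n" where
  "cadj M = (\<chi> i j. cnj (M$j$i))"

definition rip :: "real^'n \<Rightarrow> real^'n \<Rightarrow> real" where
  "rip x y = (\<Sum>i\<in>UNIV. x$i * y$i)"

definition c_spd :: "complex^'n^'n \<Rightarrow> bool" where
  "c_spd R \<longleftrightarrow> cadj R = R \<and> (\<forall>x. x \<noteq> 0 \<longrightarrow> Re (cip (R *v x) x) > 0)"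

definition r_spd :: "real^'n^'n \<Rightarrow> bool" where
  "r_spd R \<longleftrightarrow> transpose R = R \<and> (\<forall>x. x \<noteq> 0 \<longrightarrow> rip (R *v x) x > 0)"

definition cipU :: "complex^'n^'n \<Rightarrow> complex^'n \<Rightarrow> complex^'n \<Rightarrow> complex" where
  "cipU R x y = cip (R *v x) y"
definition cnormU :: "complex^'n^'n \<Rightarrow> complex^'n \<Rightarrow> real" where
  "cnormU R x = sqrt (Re (cipU R x x))"
definition cnormU' :: "complex^'n^'n \<Rightarrow> complex^'n \<Rightarrow> real" where
  "cnormU' R y = sqrt (Re (cip y (matrix_inv R *v y)))"

definition ripU :: "real^'n^'n \<Rightarrow> real^'n \<Rightarrow> real^'n \<Rightarrow> real" where
  "ripU R x y = rip (R *v x) y"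
definition rnormU :: "real^'n^'n \<Rightarrow> real^'n \<Rightarrow> real" where
  "rnormU R x = sqrt (ripU R x x)"
definition rnormU' :: "real^'n^'n \<Rightarrow> real^'n \<Rightarrow> real" where
  "rnormU' R y = sqrt (rip y (matrix_inv R *v y))"

definition cspan2 :: "complex^'n \<Rightarrow> complex^'n \<Rightarrow> (complex^'n) set" where
  "cspan2 v w = {a *s v + b *s w | a b. True}"
definition rspan2 :: "real^'n \<Rightarrow> real^'n \<Rightarrow> (real^'n) set" where
  "rspan2 v w = {a *s v + b *s w | a b. True}"

end

theory Submission
  imports Defs
begin

lemma cip_add_right: "cip x (y + z) = cip x y + cip x z"
  by (simp add: cip_def sum.distrib distrib_left)
lemma cip_add_left: "cip (x + y) z = cip x z + cip y z"
  by (simp add: cip_def sum.distrib distrib_right)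
lemma cip_diff_right: "cip x (y - z) = cip x y - cip x z"
  by (simp add: cip_def sum_subtractf right_diff_distrib)
lemma cip_diff_left: "cip (x - y) z = cip x z - cip y z"
  by (simp add: cip_def sum_subtractf left_diff_distrib)
lemma cip_minus_right: "cip x (- y) = - cip x y"
  by (simp add: cip_def sum_negf)
lemma cip_minus_left: "cip (- x) y = - cip x y"
  by (simp add: cip_def sum_negf)
lemma cip_scale_right: "cip x (c *s y) = c * cip x y"
  by (simp add: cip_def sum_distrib_left mult.left_commute)
lemma cip_scale_left: "cip (c *s x) y = cnj c * cip x y"
  by (simp add: cip_def sum_distrib_left mult.assoc)
lemma cip_zero_right[simp]: "cip x 0 = 0" by (simp add: cip_def)
lemma cip_zero_left[simp]: "cip 0 x = 0" by (simp add: cip_def)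
lemma cip_sym: "cip y x = cnj (cip x y)"
  by (simp add: cip_def mult.commute)
lemma cip_adj: "cip x (M *v y) = cip (cadj M *v x) y"
proof -
  have "cip x (M *v y) = (\<Sum>i\<in>UNIV. \<Sum>j\<in>UNIV. cnj (x$i) * (M$i$j * y$j))"
    by (simp add: cip_def matrix_vector_mult_def sum_distrib_left)
  also have "\<dots> = (\<Sum>j\<in>UNIV. \<Sum>i\<in>UNIV. cnj (x$i) * (M$i$j * y$j))"
    by (rule sum.swap)
  also have "\<dots> = cip (cadj M *v x) y"
    by (simp add: cip_def matrix_vector_mult_def cadj_def sum_distrib_right sum_distrib_left mult_ac)
  finally show ?thesis .
qed
lemma mv_smult: "(M::'a::comm_ring_1^'n^'m) *v (c *s x) = c *s (M *v x)"
  by (simp add: matrix_vector_mult_def vec_eq_iff sum_distrib_left mult_ac)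

lemma mv_neg: "(M::'a::comm_ring_1^'n^'m) *v (- x) = - (M *v x)"
  by (simp add: matrix_vector_mult_def vec_eq_iff sum_negf)

lemma minv_props:
  assumes "invertible (A::'a::field^'n^'n)"
  shows "A ** matrix_inv A = mat 1" "matrix_inv A ** A = mat 1"
proof -
  have "\<exists>A'. A ** A' = mat 1 \<and> A' ** A = mat 1" using assms invertible_def by blast
  hence "A ** matrix_inv A = mat 1 \<and> matrix_inv A ** A = mat 1"
    unfolding matrix_inv_def by (rule someI_ex)
  thus "A ** matrix_inv A = mat 1" "matrix_inv A ** A = mat 1" by auto
qed
lemma minv_app:
  assumes "invertible (A::'a::field^'n^'n)"
  shows "A *v (matrix_inv A *v x) = x" "matrix_inv A *v (A *v x) = x"
  using minv_props[OF assms] by (simp_all add: matrix_vector_mul_assoc)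

context fixes R :: "complex^'n^'n" assumes spd: "c_spd R"
begin

lemma herm: "cip (R *v x) y = cip x (R *v y)"
  using spd cip_adj[of x R y] by (simp add: c_spd_def)

lemma self_real: "cip (R *v x) x = complex_of_real (Re (cip (R *v x) x))"
proof -
  have "cip (R *v x) x = cnj (cip (R *v x) x)"
    using herm[of x x] cip_sym[of x "R *v x"] by simp
  hence "Im (cip (R *v x) x) = 0" by (metis Reals_cnj_iff complex_is_Real_iff)
  thus ?thesis by (simp add: complex_eq_iff)
qed

lemma self_nonneg: "Re (cip (R *v x) x) \<ge> 0"
  using spd by (cases "x = 0") (auto simp: c_spd_def less_imp_le)

lemma N_sq: "cnormU R x ^ 2 = Re (cip (R *v x) x)"
  unfolding cnormU_def cipU_def using self_nonneg[of x] by simp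

lemma N_nonneg: "cnormU R x \<ge> 0"
  unfolding cnormU_def cipU_def using self_nonneg[of x] by simp

lemma N_pos: "x \<noteq> 0 \<Longrightarrow> cnormU R x > 0"
  using spd by (simp add: cnormU_def cipU_def c_spd_def)

lemma R_inv: "invertible R"
proof -
  have "\<forall>x. R *v x = 0 \<longrightarrow> x = 0"
  proof (intro allI impI)
    fix x assume "R *v x = 0"
    hence "Re (cip (R *v x) x) = 0" by simp
    thus "x = 0" using spd by (metis c_spd_def less_irrefl)
  qed
  thus ?thesis using matrix_left_invertible_ker invertible_left_inverse by blast
qed

lemma CS: "cmod (cip (R *v x) y) \<le> cnormU R x * cnormU R y"
proof (cases "y = 0")
  case True thus ?thesis by (simp add: N_nonneg)
next
  case False
  define c where "c = cip (R *v x) y"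
  define a where "a = Re (cip (R *v x) x)"
  define b where "b = Re (cip (R *v y) y)"
  have bpos: "b > 0" using spd False by (simp add: b_def c_spd_def)
  have ca: "cip (R *v x) x = of_real a" using self_real a_def by simp
  have cb: "cip (R *v y) y = of_real b" using self_real b_def by simp
  have cc: "cip (R *v y) x = cnj c"
    using c_def herm cip_sym by metis
  define t where "t = cnj c / of_real b"
  define z where "z = x - t *s y"
  have "cip (R *v z) z = cip (R *v x) x - t * cip (R *v x) y - cnj t * cip (R *v y) x
      + cnj t * (t * cip (R *v y) y)"
    by (simp add: z_def matrix_vector_mult_diff_distrib mv_smult cip_diff_left cip_diff_right
        cip_scale_left cip_scale_right algebra_simps)
  also have "\<dots> = of_real a - c * cnj c / of_real b"
    using bpos by (simp add: ca cb cc t_def c_def field_simps)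
  also have "\<dots> = of_real (a - cmod c ^ 2 / b)"
    by (simp only: complex_norm_square[symmetric] of_real_diff of_real_divide)
  finally have "Re (cip (R *v z) z) = a - cmod c ^ 2 / b"
    by simp
  moreover have "0 \<le> b * Re (cip (R *v z) z)" using self_nonneg[of z] bpos by simp
  ultimately have "cmod c ^ 2 \<le> a * b" using bpos by (simp add: field_simps)
  hence "cmod c \<le> sqrt (a * b)" by (simp add: real_le_rsqrt)
  thus ?thesis by (simp add: c_def cnormU_def cipU_def a_def b_def real_sqrt_mult)
qed

lemma tri: "cnormU R (x + y) \<le> cnormU R x + cnormU R y"
proof -
  have "cnormU R (x + y) ^ 2 = Re (cip (R *v x) x) + Re (cip (R *v x) y) + Re (cip (R *v y) x)
     + Re (cip (R *v y) y)"
    by (simp add: N_sq matrix_vector_right_distrib cip_add_left cip_add_right)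
  also have "\<dots> \<le> cnormU R x ^ 2 + 2 * (cnormU R x * cnormU R y) + cnormU R y ^ 2"
  proof -
    have "Re (cip (R *v x) y) \<le> cnormU R x * cnormU R y"
      using CS[of x y] complex_Re_le_cmod order_trans by blast
    moreover have "Re (cip (R *v y) x) \<le> cnormU R x * cnormU R y"
      using CS[of y x] complex_Re_le_cmod order_trans by (metis mult.commute)
    ultimately show ?thesis by (simp add: N_sq)
  qed
  also have "\<dots> = (cnormU R x + cnormU R y) ^ 2" by (simp add: power2_sum)
  finally show ?thesis
    using N_nonneg power2_le_imp_le by (metis add_nonneg_nonneg)
qed

lemma N_neg: "cnormU R (- x) = cnormU R x"
  by (simp add: cnormU_def cipU_def mv_neg cip_minus_left cip_minus_right)

lemma N_zero[simp]: "cnormU R 0 = 0" by (simp add: cnormU_def cipU_def)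

lemma dualN: "cnormU' R y = cnormU R (matrix_inv R *v y)"
  unfolding cnormU'_def cnormU_def cipU_def using minv_app(1)[OF R_inv] by simp
lemma dualN_R: "cnormU' R (R *v y) = cnormU R y"
  unfolding cnormU'_def cnormU_def cipU_def using minv_app(2)[OF R_inv] by simp
lemma dualN_nonneg: "cnormU' R y \<ge> 0" using dualN N_nonneg by simp
lemma dual_CS: "cmod (cip y x) \<le> cnormU' R y * cnormU R x"
proof -
  have "cip y x = cip (R *v (matrix_inv R *v y)) x" by (simp add: minv_app(1)[OF R_inv])
  thus ?thesis using CS dualN by simp
qed
lemma dual_tri: "cnormU' R (x + y) \<le> cnormU' R x + cnormU' R y"
  using tri by (simp add: dualN matrix_vector_right_distrib)
lemma dual_neg: "cnormU' R (- x) = cnormU' R x"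
  using N_neg by (simp add: dualN mv_neg)

lemma IS:
  assumes eta: "\<eta> > 0" and infsup: "\<forall>x. x \<noteq> 0 \<longrightarrow> \<eta> \<le> cnormU' R (A *v x) / cnormU R x"
  shows "\<eta> * cnormU R x \<le> cnormU' R (A *v x)"
proof (cases "x = 0")
  case True thus ?thesis using dualN_nonneg by simp
next
  case False
  have "\<eta> \<le> cnormU' R (A *v x) / cnormU R x" using infsup False by blast
  thus ?thesis by (simp add: pos_le_divide_eq[OF N_pos[OF False]] mult.commute)
qed

lemma dual_IS:
  assumes invA: "invertible A" and eta: "\<eta> > 0"
    and infsup: "\<forall>x. x \<noteq> 0 \<longrightarrow> \<eta> \<le> cnormU' R (A *v x) / cnormU R x"
  shows "\<eta> * cnormU R y \<le> cnormU' R (cadj A *v y)"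
proof -
  define z where "z = matrix_inv A *v (R *v y)"
  have Az: "A *v z = R *v y" using minv_app(1)[OF invA] z_def by simp
  have "cnormU R y ^ 2 = Re (cip y (A *v z))" by (simp add: N_sq Az herm)
  also have "\<dots> = Re (cip (cadj A *v y) z)" by (simp add: cip_adj)
  also have "\<dots> \<le> cnormU' R (cadj A *v y) * cnormU R z"
    using dual_CS complex_Re_le_cmod order_trans by blast
  finally have 1: "cnormU R y ^ 2 \<le> cnormU' R (cadj A *v y) * cnormU R z" .
  have 2: "\<eta> * cnormU R z \<le> cnormU R y"
    using IS[OF eta infsup, of z] Az dualN_R by simp
  have "\<eta> * cnormU R y ^ 2 \<le> cnormU' R (cadj A *v y) * (\<eta> * cnormU R z)"
    using mult_left_mono[OF 1, of \<eta>] eta by (simp add: mult_ac)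
  also have "\<dots> \<le> cnormU' R (cadj A *v y) * cnormU R y"
    using mult_left_mono[OF 2 dualN_nonneg] .
  finally have "(\<eta> * cnormU R y) * cnormU R y \<le> cnormU' R (cadj A *v y) * cnormU R y"
    by (simp add: power2_eq_square mult_ac)
  thus ?thesis
  proof (cases "cnormU R y = 0")
    case True thus ?thesis using dualN_nonneg by simp
  next
    case False
    hence "cnormU R y > 0" using N_nonneg[of y] by simp
    thus ?thesis using \<open>(\<eta> * cnormU R y) * cnormU R y \<le> _\<close> mult_right_le_imp_le by blast
  qed
qed

end

lemma main_c:
  fixes R A :: "complex^'n^'n" and \<Theta> :: "complex^'n^'k"
  assumes spd: "c_spd R" and invA: "invertible A" and eta: "\<eta> > 0"
    and infsup: "\<forall>x. x \<noteq> 0 \<longrightarrow> \<eta> \<le> cnormU' R (A *v x) / cnormU R x"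
    and eps: "\<epsilon> \<ge> 0"
    and w_def: "w = matrix_inv R *v (b - A *v ur)"
    and hyp: "cmod (cipU R udu w - cip (\<Theta> *v udu) (\<Theta> *v w)) \<le> \<epsilon> * cnormU R udu * cnormU R w"
  shows "cmod (cip l (matrix_inv A *v b) - (cip l ur - cip (\<Theta> *v udu) (\<Theta> *v w)))
     \<le> cnormU' R (b - A *v ur) / \<eta> * ((1 + \<epsilon>) * cnormU' R (- l - cadj A *v udu) + \<epsilon> * cnormU' R l)"
proof -
  define r where "r = b - A *v ur"
  define e where "e = matrix_inv A *v b - ur"
  define rdu where "rdu = - l - cadj A *v udu"
  define X where "X = cip (\<Theta> *v udu) (\<Theta> *v w)"
  have Ae: "A *v e = r" by (simp add: e_def r_def matrix_vector_mult_diff_distrib minv_app(1)[OF invA])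
  have Rw: "R *v w = r" by (simp add: w_def r_def minv_app(1)[OF R_inv[OF spd]])
  have l_eq: "l = - rdu - cadj A *v udu" by (simp add: rdu_def)
  have "cip l (matrix_inv A *v b) - (cip l ur - X) = cip l e + X"
    by (simp add: e_def cip_diff_right)
  also have "cip l e = - cip rdu e - cip udu (A *v e)"
    by (simp add: l_eq cip_diff_left cip_minus_left cip_adj)
  also have "cip udu (A *v e) = cipU R udu w"
    by (simp add: Ae cipU_def herm[OF spd] Rw)
  finally have key: "cip l (matrix_inv A *v b) - (cip l ur - X) = - cip rdu e - (cipU R udu w - X)"
    by simp
  define Nr where "Nr = cnormU' R r"
  define Nd where "Nd = cnormU' R rdu"
  define Nl where "Nl = cnormU' R l"
  have Nr0: "Nr \<ge> 0" and Nd0: "Nd \<ge> 0" and Nl0: "Nl \<ge> 0"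
    using dualN_nonneg[OF spd] by (simp_all add: Nr_def Nd_def Nl_def)
  have Ne: "cnormU R e \<le> Nr / \<eta>"
    using IS[OF spd eta infsup, of e] Ae eta by (simp add: Nr_def pos_le_divide_eq mult_ac)
  have b1: "cmod (cip rdu e) \<le> Nd * (Nr / \<eta>)"
    using dual_CS[OF spd, of rdu e] mult_left_mono[OF Ne Nd0] by (simp add: Nd_def)
  have Nw: "cnormU R w = Nr" by (simp add: Nr_def dualN[OF spd] w_def r_def)
  have "\<eta> * cnormU R udu \<le> cnormU' R (cadj A *v udu)"
    by (rule dual_IS[OF spd invA eta infsup])
  also have "cadj A *v udu = - l + - rdu" by (simp add: rdu_def)
  also have "cnormU' R (- l + - rdu) \<le> Nl + Nd"
    using dual_tri[OF spd, of "- l" "- rdu"] by (simp add: dual_neg[OF spd] Nl_def Nd_def)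
  finally have Nu: "cnormU R udu \<le> (Nl + Nd) / \<eta>" using eta by (simp add: pos_le_divide_eq mult_ac)
  have b2: "cmod (cipU R udu w - X) \<le> \<epsilon> * ((Nl + Nd) / \<eta>) * Nr"
  proof -
    have "\<epsilon> * cnormU R udu \<le> \<epsilon> * ((Nl + Nd) / \<eta>)" using Nu eps by (rule mult_left_mono)
    hence "\<epsilon> * cnormU R udu * Nr \<le> \<epsilon> * ((Nl + Nd) / \<eta>) * Nr" using Nr0 by (rule mult_right_mono)
    thus ?thesis using hyp Nw X_def by simp
  qed
  have "cmod (cip l (matrix_inv A *v b) - (cip l ur - X)) \<le> cmod (cip rdu e) + cmod (cipU R udu w - X)"
    unfolding key by (metis norm_diff_triangle_ineq norm_minus_cancel diff_conv_add_uminus add.commute norm_triangle_ineq4)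
  also have "\<dots> \<le> Nd * (Nr / \<eta>) + \<epsilon> * ((Nl + Nd) / \<eta>) * Nr" using b1 b2 by simp
  also have "\<dots> = Nr / \<eta> * ((1 + \<epsilon>) * Nd + \<epsilon> * Nl)" using eta by (simp add: field_simps)
  finally show ?thesis by (simp add: X_def Nr_def Nd_def Nl_def r_def rdu_def)
qed

lemma rip_add_right: "rip x (y + z) = rip x y + rip x z"
  by (simp add: rip_def sum.distrib distrib_left)
lemma rip_add_left: "rip (x + y) z = rip x z + rip y z"
  by (simp add: rip_def sum.distrib distrib_right)
lemma rip_diff_right: "rip x (y - z) = rip x y - rip x z"
  by (simp add: rip_def sum_subtractf right_diff_distrib)
lemma rip_diff_left: "rip (x - y) z = rip x z - rip y z"
  by (simp add: rip_def sum_subtractf left_diff_distrib)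
lemma rip_minus_right: "rip x (- y) = - rip x y"
  by (simp add: rip_def sum_negf)
lemma rip_minus_left: "rip (- x) y = - rip x y"
  by (simp add: rip_def sum_negf)
lemma rip_scale_right: "rip x (c *s y) = c * rip x y"
  by (simp add: rip_def sum_distrib_left mult.left_commute)
lemma rip_scale_left: "rip (c *s x) y = c * rip x y"
  by (simp add: rip_def sum_distrib_left mult.assoc)
lemma rip_zero_right[simp]: "rip x 0 = 0" by (simp add: rip_def)
lemma rip_zero_left[simp]: "rip 0 x = 0" by (simp add: rip_def)
lemma rip_sym: "rip y x = rip x y"
  by (simp add: rip_def mult.commute)
lemma rip_adj: "rip x (M *v y) = rip (transpose M *v x) y"
proof -
  have "rip x (M *v y) = (\<Sum>i\<in>UNIV. \<Sum>j\<in>UNIV. x$i * (M$i$j * y$j))"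
    by (simp add: rip_def matrix_vector_mult_def sum_distrib_left)
  also have "\<dots> = (\<Sum>j\<in>UNIV. \<Sum>i\<in>UNIV. x$i * (M$i$j * y$j))"
    by (rule sum.swap)
  also have "\<dots> = rip (transpose M *v x) y"
    by (simp add: rip_def matrix_vector_mult_def transpose_def sum_distrib_right sum_distrib_left mult_ac)
  finally show ?thesis .
qed

context fixes R :: "real^'n^'n" assumes spd: "r_spd R"
begin

lemma rherm: "rip (R *v x) y = rip x (R *v y)"
  using spd rip_adj[of x R y] by (simp add: r_spd_def)

lemma rself_nonneg: "rip (R *v x) x \<ge> 0"
  using spd by (cases "x = 0") (auto simp: r_spd_def less_imp_le)

lemma rN_sq: "rnormU R x ^ 2 = rip (R *v x) x"
  unfolding rnormU_def ripU_def using rself_nonneg[of x] by simp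

lemma rN_nonneg: "rnormU R x \<ge> 0"
  unfolding rnormU_def ripU_def using rself_nonneg[of x] by simp

lemma rN_pos: "x \<noteq> 0 \<Longrightarrow> rnormU R x > 0"
  using spd by (simp add: rnormU_def ripU_def r_spd_def)

lemma rR_inv: "invertible R"
proof -
  have "\<forall>x. R *v x = 0 \<longrightarrow> x = 0"
  proof (intro allI impI)
    fix x assume "R *v x = 0"
    hence "rip (R *v x) x = 0" by simp
    thus "x = 0" using spd by (metis r_spd_def less_irrefl)
  qed
  thus ?thesis using matrix_left_invertible_ker invertible_left_inverse by blast
qed

lemma rCS: "\<bar>rip (R *v x) y\<bar> \<le> rnormU R x * rnormU R y"
proof (cases "y = 0")
  case True thus ?thesis by (simp add: rN_nonneg)
next
  case False
  define c where "c = rip (R *v x) y"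
  define a where "a = rip (R *v x) x"
  define b where "b = rip (R *v y) y"
  have bpos: "b > 0" using spd False by (simp add: b_def r_spd_def)
  have cc: "rip (R *v y) x = c"
    using c_def rherm rip_sym by metis
  define t where "t = c / b"
  define z where "z = x - t *s y"
  have "rip (R *v z) z = rip (R *v x) x - t * rip (R *v x) y - t * rip (R *v y) x
      + t * (t * rip (R *v y) y)"
    by (simp add: z_def matrix_vector_mult_diff_distrib mv_smult rip_diff_left rip_diff_right
        rip_scale_left rip_scale_right algebra_simps)
  also have "\<dots> = a - c ^ 2 / b"
  proof -
    have e1: "t * c = c ^ 2 / b" by (simp add: t_def power2_eq_square)
    have e2: "t * (t * b) = c ^ 2 / b" using bpos by (simp add: t_def power2_eq_square)
    show ?thesis using e1 e2 by (simp add: a_def[symmetric] b_def[symmetric] cc c_def[symmetric] mult.commute)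
  qed
  finally have "rip (R *v z) z = a - c ^ 2 / b" .
  moreover have "0 \<le> b * rip (R *v z) z" using rself_nonneg[of z] bpos by simp
  ultimately have "b * (a - c ^ 2 / b) \<ge> 0" by simp
  hence "\<bar>c\<bar> ^ 2 \<le> a * b" using bpos by (simp add: right_diff_distrib mult.commute)
  hence "\<bar>c\<bar> \<le> sqrt (a * b)" by (simp add: real_le_rsqrt)
  thus ?thesis by (simp add: c_def rnormU_def ripU_def a_def b_def real_sqrt_mult)
qed

lemma rtri: "rnormU R (x + y) \<le> rnormU R x + rnormU R y"
proof -
  have "rnormU R (x + y) ^ 2 = rip (R *v x) x + rip (R *v x) y + rip (R *v y) x
     + rip (R *v y) y"
    by (simp add: rN_sq matrix_vector_right_distrib rip_add_left rip_add_right)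
  also have "\<dots> \<le> rnormU R x ^ 2 + 2 * (rnormU R x * rnormU R y) + rnormU R y ^ 2"
  proof -
    have "rip (R *v x) y \<le> rnormU R x * rnormU R y"
      using rCS[of x y] abs_le_D1 order_trans by blast
    moreover have "rip (R *v y) x \<le> rnormU R x * rnormU R y"
      using rCS[of y x] abs_le_D1 order_trans by (metis mult.commute)
    ultimately show ?thesis by (simp add: rN_sq)
  qed
  also have "\<dots> = (rnormU R x + rnormU R y) ^ 2" by (simp add: power2_sum)
  finally show ?thesis
    using rN_nonneg power2_le_imp_le by (metis add_nonneg_nonneg)
qed

lemma rN_neg: "rnormU R (- x) = rnormU R x"
  by (simp add: rnormU_def ripU_def mv_neg rip_minus_left rip_minus_right)

lemma rN_zero[simp]: "rnormU R 0 = 0" by (simp add: rnormU_def ripU_def)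

lemma rdualN: "rnormU' R y = rnormU R (matrix_inv R *v y)"
  unfolding rnormU'_def rnormU_def ripU_def using minv_app(1)[OF rR_inv] by simp
lemma rdualN_R: "rnormU' R (R *v y) = rnormU R y"
  unfolding rnormU'_def rnormU_def ripU_def using minv_app(2)[OF rR_inv] by simp
lemma rdualrN_nonneg: "rnormU' R y \<ge> 0" using rdualN rN_nonneg by simp
lemma rdual_rCS: "abs (rip y x) \<le> rnormU' R y * rnormU R x"
proof -
  have "rip y x = rip (R *v (matrix_inv R *v y)) x" by (simp add: minv_app(1)[OF rR_inv])
  thus ?thesis using rCS rdualN by simp
qed
lemma rdual_tri: "rnormU' R (x + y) \<le> rnormU' R x + rnormU' R y"
  using rtri by (simp add: rdualN matrix_vector_right_distrib)
lemma rdual_neg: "rnormU' R (- x) = rnormU' R x"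
  using rN_neg by (simp add: rdualN mv_neg)

lemma rIS:
  assumes eta: "\<eta> > 0" and infsup: "\<forall>x. x \<noteq> 0 \<longrightarrow> \<eta> \<le> rnormU' R (A *v x) / rnormU R x"
  shows "\<eta> * rnormU R x \<le> rnormU' R (A *v x)"
proof (cases "x = 0")
  case True thus ?thesis using rdualrN_nonneg by simp
next
  case False
  have "\<eta> \<le> rnormU' R (A *v x) / rnormU R x" using infsup False by blast
  thus ?thesis by (simp add: pos_le_divide_eq[OF rN_pos[OF False]] mult.commute)
qed

lemma rdual_IS:
  assumes invA: "invertible A" and eta: "\<eta> > 0"
    and infsup: "\<forall>x. x \<noteq> 0 \<longrightarrow> \<eta> \<le> rnormU' R (A *v x) / rnormU R x"
  shows "\<eta> * rnormU R y \<le> rnormU' R (transpose A *v y)"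
proof -
  define z where "z = matrix_inv A *v (R *v y)"
  have Az: "A *v z = R *v y" using minv_app(1)[OF invA] z_def by simp
  have "rnormU R y ^ 2 = rip y (A *v z)" by (simp add: rN_sq Az rherm)
  also have "\<dots> = rip (transpose A *v y) z" by (simp add: rip_adj)
  also have "\<dots> \<le> rnormU' R (transpose A *v y) * rnormU R z"
    using rdual_rCS abs_le_D1 order_trans by blast
  finally have 1: "rnormU R y ^ 2 \<le> rnormU' R (transpose A *v y) * rnormU R z" .
  have 2: "\<eta> * rnormU R z \<le> rnormU R y"
    using rIS[OF eta infsup, of z] Az rdualN_R by simp
  have "\<eta> * rnormU R y ^ 2 \<le> rnormU' R (transpose A *v y) * (\<eta> * rnormU R z)"
    using mult_left_mono[OF 1, of \<eta>] eta by (simp add: mult_ac)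
  also have "\<dots> \<le> rnormU' R (transpose A *v y) * rnormU R y"
    using mult_left_mono[OF 2 rdualrN_nonneg] .
  finally have "(\<eta> * rnormU R y) * rnormU R y \<le> rnormU' R (transpose A *v y) * rnormU R y"
    by (simp add: power2_eq_square mult_ac)
  thus ?thesis
  proof (cases "rnormU R y = 0")
    case True thus ?thesis using rdualrN_nonneg by simp
  next
    case False
    hence "rnormU R y > 0" using rN_nonneg[of y] by simp
    thus ?thesis using \<open>(\<eta> * rnormU R y) * rnormU R y \<le> _\<close> mult_right_le_imp_le by blast
  qed
qed

end

lemma main_r:
  fixes R A :: "real^'n^'n" and \<Theta> :: "real^'n^'k"
  assumes spd: "r_spd R" and invA: "invertible A" and eta: "\<eta> > 0"
    and infsup: "\<forall>x. x \<noteq> 0 \<longrightarrow> \<eta> \<le> rnormU' R (A *v x) / rnormU R x"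
    and eps: "\<epsilon> \<ge> 0"
    and w_def: "w = matrix_inv R *v (b - A *v ur)"
    and hyp: "abs (ripU R udu w - rip (\<Theta> *v udu) (\<Theta> *v w)) \<le> \<epsilon> * rnormU R udu * rnormU R w"
  shows "abs (rip l (matrix_inv A *v b) - (rip l ur - rip (\<Theta> *v udu) (\<Theta> *v w)))
     \<le> rnormU' R (b - A *v ur) / \<eta> * ((1 + \<epsilon>) * rnormU' R (- l - transpose A *v udu) + \<epsilon> * rnormU' R l)"
proof -
  define r where "r = b - A *v ur"
  define e where "e = matrix_inv A *v b - ur"
  define rdu where "rdu = - l - transpose A *v udu"
  define X where "X = rip (\<Theta> *v udu) (\<Theta> *v w)"
  have Ae: "A *v e = r" by (simp add: e_def r_def matrix_vector_mult_diff_distrib minv_app(1)[OF invA])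
  have Rw: "R *v w = r" by (simp add: w_def r_def minv_app(1)[OF rR_inv[OF spd]])
  have l_eq: "l = - rdu - transpose A *v udu" by (simp add: rdu_def)
  have "rip l (matrix_inv A *v b) - (rip l ur - X) = rip l e + X"
    by (simp add: e_def rip_diff_right)
  also have "rip l e = - rip rdu e - rip udu (A *v e)"
    by (simp add: l_eq rip_diff_left rip_minus_left rip_adj)
  also have "rip udu (A *v e) = ripU R udu w"
    by (simp add: Ae ripU_def rherm[OF spd] Rw)
  finally have key: "rip l (matrix_inv A *v b) - (rip l ur - X) = - rip rdu e - (ripU R udu w - X)"
    by simp
  define Nr where "Nr = rnormU' R r"
  define Nd where "Nd = rnormU' R rdu"
  define Nl where "Nl = rnormU' R l"
  have Nr0: "Nr \<ge> 0" and Nd0: "Nd \<ge> 0" and Nl0: "Nl \<ge> 0"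
    using rdualrN_nonneg[OF spd] by (simp_all add: Nr_def Nd_def Nl_def)
  have Ne: "rnormU R e \<le> Nr / \<eta>"
    using rIS[OF spd eta infsup, of e] Ae eta by (simp add: Nr_def pos_le_divide_eq mult_ac)
  have b1: "abs (rip rdu e) \<le> Nd * (Nr / \<eta>)"
    using rdual_rCS[OF spd, of rdu e] mult_left_mono[OF Ne Nd0] by (simp add: Nd_def)
  have Nw: "rnormU R w = Nr" by (simp add: Nr_def rdualN[OF spd] w_def r_def)
  have "\<eta> * rnormU R udu \<le> rnormU' R (transpose A *v udu)"
    by (rule rdual_IS[OF spd invA eta infsup])
  also have "transpose A *v udu = - l + - rdu" by (simp add: rdu_def)
  also have "rnormU' R (- l + - rdu) \<le> Nl + Nd"
    using rdual_tri[OF spd, of "- l" "- rdu"] by (simp add: rdual_neg[OF spd] Nl_def Nd_def)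
  finally have Nu: "rnormU R udu \<le> (Nl + Nd) / \<eta>" using eta by (simp add: pos_le_divide_eq mult_ac)
  have b2: "abs (ripU R udu w - X) \<le> \<epsilon> * ((Nl + Nd) / \<eta>) * Nr"
  proof -
    have "\<epsilon> * rnormU R udu \<le> \<epsilon> * ((Nl + Nd) / \<eta>)" using Nu eps by (rule mult_left_mono)
    hence "\<epsilon> * rnormU R udu * Nr \<le> \<epsilon> * ((Nl + Nd) / \<eta>) * Nr" using Nr0 by (rule mult_right_mono)
    thus ?thesis using hyp Nw X_def by simp
  qed
  have "abs (rip l (matrix_inv A *v b) - (rip l ur - X)) \<le> abs (rip rdu e) + abs (ripU R udu w - X)"
    unfolding key by arith
  also have "\<dots> \<le> Nd * (Nr / \<eta>) + \<epsilon> * ((Nl + Nd) / \<eta>) * Nr" using b1 b2 by simp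
  also have "\<dots> = Nr / \<eta> * ((1 + \<epsilon>) * Nd + \<epsilon> * Nl)" using eta by (simp add: field_simps)
  finally show ?thesis by (simp add: X_def Nr_def Nd_def Nl_def r_def rdu_def)
qed

theorem proposition4p6:
  shows
  "(\<forall>(RU::real^'n^'n) (A::real^'n^'n) (b::real^'n) (l::real^'n) (ur::real^'n) (udu::real^'n)
       (\<Theta>::real^'n^'k) (\<eta>::real) (\<epsilon>::real).
     let Rinv = matrix_inv RU; u = matrix_inv A *v b; s = rip l u;
         r = (\<lambda>x. b - A *v x); rdu = (\<lambda>x. - l - transpose A *v x);
         sr = rip l ur;
         sspd = sr - rip (\<Theta> *v udu) (\<Theta> *v (Rinv *v r ur))
     in r_spd RU \<longrightarrow> invertible A \<longrightarrow> \<eta> > 0 \<longrightarrow>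
        (\<forall>x. x \<noteq> 0 \<longrightarrow> \<eta> \<le> rnormU' RU (A *v x) / rnormU RU x) \<longrightarrow>
        0 \<le> \<epsilon> \<longrightarrow> \<epsilon> < 1 \<longrightarrow>
        (\<forall>x\<in>rspan2 udu (Rinv *v r ur). \<forall>y\<in>rspan2 udu (Rinv *v r ur).
            \<bar>ripU RU x y - rip (\<Theta> *v x) (\<Theta> *v y)\<bar> \<le> \<epsilon> * rnormU RU x * rnormU RU y) \<longrightarrow>
        \<bar>s - sspd\<bar> \<le> rnormU' RU (r ur) / \<eta> *
            ((1 + \<epsilon>) * rnormU' RU (rdu udu) + \<epsilon> * rnormU' RU l))
   \<and>
   (\<forall>(RU::complex^'n^'n) (A::complex^'n^'n) (b::complex^'n) (l::complex^'n) (ur::complex^'n)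
       (udu::complex^'n) (\<Theta>::complex^'n^'k) (\<eta>::real) (\<epsilon>::real).
     let Rinv = matrix_inv RU; u = matrix_inv A *v b; s = cip l u;
         r = (\<lambda>x. b - A *v x); rdu = (\<lambda>x. - l - cadj A *v x);
         sr = cip l ur;
         sspd = sr - cip (\<Theta> *v udu) (\<Theta> *v (Rinv *v r ur))
     in c_spd RU \<longrightarrow> invertible A \<longrightarrow> \<eta> > 0 \<longrightarrow>
        (\<forall>x. x \<noteq> 0 \<longrightarrow> \<eta> \<le> cnormU' RU (A *v x) / cnormU RU x) \<longrightarrow>
        0 \<le> \<epsilon> \<longrightarrow> \<epsilon> < 1 \<longrightarrow>
        (\<forall>x\<in>cspan2 udu (Rinv *v r ur). \<forall>y\<in>cspan2 udu (Rinv *v r ur).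
            cmod (cipU RU x y - cip (\<Theta> *v x) (\<Theta> *v y)) \<le> \<epsilon> * cnormU RU x * cnormU RU y) \<longrightarrow>
        cmod (s - sspd) \<le> cnormU' RU (r ur) / \<eta> *
            ((1 + \<epsilon>) * cnormU' RU (rdu udu) + \<epsilon> * cnormU' RU l))"
  proof (intro conjI allI)
  fix RU A :: "real^'n^'n" and b l ur udu :: "real^'n" and \<Theta> :: "real^'n^'k" and \<eta> \<epsilon> :: real
  show "let Rinv = matrix_inv RU; u = matrix_inv A *v b; s = rip l u;
         r = (\<lambda>x. b - A *v x); rdu = (\<lambda>x. - l - transpose A *v x);
         sr = rip l ur;
         sspd = sr - rip (\<Theta> *v udu) (\<Theta> *v (Rinv *v r ur))
     in r_spd RU \<longrightarrow> invertible A \<longrightarrow> \<eta> > 0 \<longrightarrow>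
        (\<forall>x. x \<noteq> 0 \<longrightarrow> \<eta> \<le> rnormU' RU (A *v x) / rnormU RU x) \<longrightarrow>
        0 \<le> \<epsilon> \<longrightarrow> \<epsilon> < 1 \<longrightarrow>
        (\<forall>x\<in>rspan2 udu (Rinv *v r ur). \<forall>y\<in>rspan2 udu (Rinv *v r ur).
            \<bar>ripU RU x y - rip (\<Theta> *v x) (\<Theta> *v y)\<bar> \<le> \<epsilon> * rnormU RU x * rnormU RU y) \<longrightarrow>
        \<bar>s - sspd\<bar> \<le> rnormU' RU (r ur) / \<eta> *
            ((1 + \<epsilon>) * rnormU' RU (rdu udu) + \<epsilon> * rnormU' RU l)"
    unfolding Let_def
  proof (intro impI)
    define w where "w = matrix_inv RU *v (b - A *v ur)"
    assume H: "r_spd RU" "invertible A" "\<eta> > 0"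
      "\<forall>x. x \<noteq> 0 \<longrightarrow> \<eta> \<le> rnormU' RU (A *v x) / rnormU RU x" "0 \<le> \<epsilon>"
      "\<forall>x\<in>rspan2 udu (matrix_inv RU *v (b - A *v ur)). \<forall>y\<in>rspan2 udu (matrix_inv RU *v (b - A *v ur)).
            \<bar>ripU RU x y - rip (\<Theta> *v x) (\<Theta> *v y)\<bar> \<le> \<epsilon> * rnormU RU x * rnormU RU y"
    have m1: "udu \<in> rspan2 udu w" unfolding rspan2_def by (rule CollectI, rule exI[of _ 1], rule exI[of _ 0]) simp
    have m2: "w \<in> rspan2 udu w" unfolding rspan2_def by (rule CollectI, rule exI[of _ 0], rule exI[of _ 1]) simp
    have hyp: "\<bar>ripU RU udu w - rip (\<Theta> *v udu) (\<Theta> *v w)\<bar> \<le> \<epsilon> * rnormU RU udu * rnormU RU w"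
      using H(6) m1 m2 unfolding w_def by blast
    show "\<bar>rip l (matrix_inv A *v b) - (rip l ur - rip (\<Theta> *v udu) (\<Theta> *v (matrix_inv RU *v (b - A *v ur))))\<bar>
         \<le> rnormU' RU (b - A *v ur) / \<eta> * ((1 + \<epsilon>) * rnormU' RU (- l - transpose A *v udu) + \<epsilon> * rnormU' RU l)"
      using main_r[OF H(1-5) w_def hyp] unfolding w_def .
  qed
next
  fix RU A :: "complex^'n^'n" and b l ur udu :: "complex^'n" and \<Theta> :: "complex^'n^'k" and \<eta> \<epsilon> :: real
  show "let Rinv = matrix_inv RU; u = matrix_inv A *v b; s = cip l u;
         r = (\<lambda>x. b - A *v x); rdu = (\<lambda>x. - l - cadj A *v x);
         sr = cip l ur;
         sspd = sr - cip (\<Theta> *v udu) (\<Theta> *v (Rinv *v r ur))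
     in c_spd RU \<longrightarrow> invertible A \<longrightarrow> \<eta> > 0 \<longrightarrow>
        (\<forall>x. x \<noteq> 0 \<longrightarrow> \<eta> \<le> cnormU' RU (A *v x) / cnormU RU x) \<longrightarrow>
        0 \<le> \<epsilon> \<longrightarrow> \<epsilon> < 1 \<longrightarrow>
        (\<forall>x\<in>cspan2 udu (Rinv *v r ur). \<forall>y\<in>cspan2 udu (Rinv *v r ur).
            cmod (cipU RU x y - cip (\<Theta> *v x) (\<Theta> *v y)) \<le> \<epsilon> * cnormU RU x * cnormU RU y) \<longrightarrow>
        cmod (s - sspd) \<le> cnormU' RU (r ur) / \<eta> *
            ((1 + \<epsilon>) * cnormU' RU (rdu udu) + \<epsilon> * cnormU' RU l)"
    unfolding Let_def
  proof (intro impI)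
    define w where "w = matrix_inv RU *v (b - A *v ur)"
    assume H: "c_spd RU" "invertible A" "\<eta> > 0"
      "\<forall>x. x \<noteq> 0 \<longrightarrow> \<eta> \<le> cnormU' RU (A *v x) / cnormU RU x" "0 \<le> \<epsilon>"
      "\<forall>x\<in>cspan2 udu (matrix_inv RU *v (b - A *v ur)). \<forall>y\<in>cspan2 udu (matrix_inv RU *v (b - A *v ur)).
            cmod (cipU RU x y - cip (\<Theta> *v x) (\<Theta> *v y)) \<le> \<epsilon> * cnormU RU x * cnormU RU y"
    have m1: "udu \<in> cspan2 udu w" unfolding cspan2_def by (rule CollectI, rule exI[of _ 1], rule exI[of _ 0]) simp
    have m2: "w \<in> cspan2 udu w" unfolding cspan2_def by (rule CollectI, rule exI[of _ 0], rule exI[of _ 1]) simp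
    have hyp: "cmod (cipU RU udu w - cip (\<Theta> *v udu) (\<Theta> *v w)) \<le> \<epsilon> * cnormU RU udu * cnormU RU w"
      using H(6) m1 m2 unfolding w_def by blast
    show "cmod (cip l (matrix_inv A *v b) - (cip l ur - cip (\<Theta> *v udu) (\<Theta> *v (matrix_inv RU *v (b - A *v ur)))))
         \<le> cnormU' RU (b - A *v ur) / \<eta> * ((1 + \<epsilon>) * cnormU' RU (- l - cadj A *v udu) + \<epsilon> * cnormU' RU l)"
      using main_c[OF H(1-5) w_def hyp] unfolding w_def .
  qed
qed

end
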